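(* Let $B_R=(V,E)$ be the Bratteli diagram with $|V_n|=n+1$ vertices at each level $n\ge0$, in which each vertex of $V_n$ is joined to each vertex of $V_{n+1}$ by exactly one edge. Then the full group $G$ of $B_R$ is isomorphic to the group $R$ of rational permutations of the unit interval $[0,1)$.
   Context: For a Bratteli diagram with levels $V_0=\{v_0\},V_1,\dots$ and edge sets $E_n$ from $V_{n-1}$ to $V_n$, the path space $X$ is the set of infinite paths from $v_0$; $G_n$ is the group of homeomorphisms of $X$ that replace the first $n$ edges of each path by another path from $v_0$ to the same vertex of $V_n$ (depending only on those edges) and leave the rest unchanged; the full group is $G=\bigcup_nG_n$. For $n\in\mathbb N$ and a permutation $s$ of $\{0,1,\dots,n-1\}$, let $g_s:[0,1)\to[0,1)$ be $g_s(x)=\bigl(s(\lfloor nx\rfloor)+\{nx\}\bigr)/n$, where $\{a\}$ is the fractional part of $a$. The group $R$ is the set of all bijections $g_s$, over all $n\in\mathbb N$ and all permutations $s$ of $\{0,\dots,n-1\}$, under composition. *)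

theory Defs
  imports "HOL-Analysis.Analysis" "HOL-Algebra.Algebra"
begin

text \<open>The Bratteli diagram B_R: level n has vertices {0..n}; between every vertex of
  level n-1 and every vertex of level n there is exactly one edge.  Hence an infinite
  path from v0 is determined by its sequence of vertices x 0, x 1, x 2, ... with x n in {0..n}
  (x 0 = 0 is the root v0), and its n-th edge is the pair (x (n-1), x n).\<close>

definition BR_paths :: "(nat \<Rightarrow> nat) set" where
  "BR_paths = {x. \<forall>n. x n \<le> n}"

text \<open>Path space topology: subspace of the product of discrete spaces (the standard
  topology on nat => nat is the product topology, nat being discrete).\<close>

definition BR_Gn :: "nat \<Rightarrow> ((nat \<Rightarrow> nat) \<Rightarrow> (nat \<Rightarrow> nat)) set" where
  "BR_Gn n = {g. (\<forall>x. x \<notin> BR_paths \<longrightarrow> g x = x)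
      \<and> homeomorphic_map (top_of_set BR_paths) (top_of_set BR_paths) g
      \<and> (\<forall>x\<in>BR_paths. \<forall>k\<ge>n. g x k = x k)
      \<and> (\<forall>x\<in>BR_paths. \<forall>y\<in>BR_paths. (\<forall>k\<le>n. x k = y k) \<longrightarrow> (\<forall>k\<le>n. g x k = g y k))}"

definition BR_full_group :: "((nat \<Rightarrow> nat) \<Rightarrow> (nat \<Rightarrow> nat)) monoid" where
  "BR_full_group = \<lparr>carrier = (\<Union>n. BR_Gn n), monoid.mult = (\<lambda>f g. f \<circ> g), one = id\<rparr>"

definition rat_perm :: "nat \<Rightarrow> (nat \<Rightarrow> nat) \<Rightarrow> real \<Rightarrow> real" where
  "rat_perm n s x = (if 0 \<le> x \<and> x < 1
      then (real (s (nat \<lfloor>real n * x\<rfloor>)) + frac (real n * x)) / real n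
      else x)"

definition rat_perm_group :: "(real \<Rightarrow> real) monoid" where
  "rat_perm_group = \<lparr>carrier = {rat_perm n s | n s. n \<ge> 1 \<and> s permutes {..<n}},
      monoid.mult = (\<lambda>f g. f \<circ> g), one = id\<rparr>"

end

theory Submission imports Defs begin

lemma rp_basic:
  assumes s: "s permutes {..<n}" and n: "n \<ge> 1" and hx: "0 \<le> x" "x < 1"
  shows "rat_perm n s x = (real (s (nat \<lfloor>real n * x\<rfloor>)) + frac (real n * x)) / real n"
    and "0 \<le> rat_perm n s x" "rat_perm n s x < 1"
    and "nat \<lfloor>real n * rat_perm n s x\<rfloor> = s (nat \<lfloor>real n * x\<rfloor>)"
    and "frac (real n * rat_perm n s x) = frac (real n * x)"
proof -
  define a where "a = nat \<lfloor>real n * x\<rfloor>"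
  have a0: "\<lfloor>real n * x\<rfloor> \<ge> 0" using hx n by simp
  have "real n * x < real n" using hx n by simp
  hence "\<lfloor>real n * x\<rfloor> < int n" by (simp add: floor_less_iff)
  hence "a < n" unfolding a_def using a0 by linarith
  hence sa: "s a < n" using s by (meson lessThan_iff permutes_in_image)
  have f: "0 \<le> frac (real n * x)" "frac (real n * x) < 1" by (auto simp: frac_lt_1)
  show eq: "rat_perm n s x = (real (s (nat \<lfloor>real n * x\<rfloor>)) + frac (real n * x)) / real n"
    using hx by (simp add: rat_perm_def)
  have "real n * rat_perm n s x = real (s a) + frac (real n * x)"
    using eq n unfolding a_def by simp
  moreover have "\<lfloor>real (s a) + frac (real n * x)\<rfloor> = int (s a)"
    using f by (simp add: floor_unique)
  ultimately show "nat \<lfloor>real n * rat_perm n s x\<rfloor> = s (nat \<lfloor>real n * x\<rfloor>)"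
    and "frac (real n * rat_perm n s x) = frac (real n * x)"
    unfolding a_def by (simp_all add: frac_def)
  show "0 \<le> rat_perm n s x" using eq f by simp
  have "real (s a) + frac (real n * x) < real n" using sa f by linarith
  thus "rat_perm n s x < 1" using eq n unfolding a_def by (simp add: divide_less_eq)
qed

lemma rp_out: "\<not> (0 \<le> x \<and> x < 1) \<Longrightarrow> rat_perm n s x = x"
  unfolding rat_perm_def by (rule if_not_P)

lemma rp_comp:
  assumes s: "s permutes {..<n}" and t: "t permutes {..<n}" and n: "n \<ge> 1"
  shows "rat_perm n s \<circ> rat_perm n t = rat_perm n (s \<circ> t)"
proof
  fix x
  show "(rat_perm n s \<circ> rat_perm n t) x = rat_perm n (s \<circ> t) x"
  proof (cases "0 \<le> x \<and> x < 1")
    case True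
    have st: "s \<circ> t permutes {..<n}" using s t by (simp add: permutes_compose)
    show ?thesis using True rp_basic[OF t n] rp_basic[OF s n, of "rat_perm n t x"] rp_basic[OF st n, of x]
      by simp
  qed (simp add: rp_out)
qed

lemma rp_id: "rat_perm 1 id = id"
proof
  fix x show "rat_perm 1 id x = id x"
    by (cases "0 \<le> x \<and> x < 1") (auto simp: rat_perm_def frac_def floor_eq_iff)
qed

definition refine :: "nat \<Rightarrow> nat \<Rightarrow> (nat \<Rightarrow> nat) \<Rightarrow> nat \<Rightarrow> nat" where
  "refine n c s B = (if B < n * c then s (B div c) * c + B mod c else B)"

lemma refine_lt:
  assumes s: "s permutes {..<n}" and c: "c \<ge> 1" and B: "B < n * c"
  shows "refine n c s B < n * c"
proof -
  have "B div c < n" using B c by (simp add: div_less_iff_less_mult)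
  hence "s (B div c) < n" using s by (meson lessThan_iff permutes_in_image)
  hence "s (B div c) + 1 \<le> n" by simp
  hence "(s (B div c) + 1) * c \<le> n * c" by (rule mult_right_mono) simp
  moreover have "B mod c < c" using c by simp
  ultimately show ?thesis using B by (simp add: refine_def algebra_simps)
qed

lemma refine_permutes:
  assumes s: "s permutes {..<n}" and c: "c \<ge> 1"
  shows "refine n c s permutes {..<n * c}"
proof (rule bij_imp_permutes)
  have sub: "refine n c s ` {..<n * c} \<subseteq> {..<n * c}" using refine_lt[OF s c] by auto
  have inj: "inj_on (refine n c s) {..<n * c}"
  proof (rule inj_onI)
    fix x y assume x: "x \<in> {..<n * c}" and y: "y \<in> {..<n * c}" and e: "refine n c s x = refine n c s y"
    from e x y have e2: "s (x div c) * c + x mod c = s (y div c) * c + y mod c" by (simp add: refine_def)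
    have "(s (x div c) * c + x mod c) mod c = x mod c" "(s (y div c) * c + y mod c) mod c = y mod c" by simp_all
    hence m: "x mod c = y mod c" using e2 by metis
    have "(s (x div c) * c + x mod c) div c = s (x div c)" "(s (y div c) * c + y mod c) div c = s (y div c)"
      using c by simp_all
    hence "s (x div c) = s (y div c)" using e2 by metis
    hence "x div c = y div c" using s by (metis permutes_inj injD)
    thus "x = y" using m by (metis div_mult_mod_eq)
  qed
  show "bij_betw (refine n c s) {..<n * c} {..<n * c}"
    using endo_inj_surj[OF _ sub inj] inj by (simp add: bij_betw_def)
  show "\<And>x. x \<notin> {..<n * c} \<Longrightarrow> refine n c s x = x" by (simp add: refine_def)
qed

lemma rp_refine:
  assumes s: "s permutes {..<n}" and n: "n \<ge> 1" and c: "c \<ge> 1"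
  shows "rat_perm n s = rat_perm (n * c) (refine n c s)"
proof
  fix x
  show "rat_perm n s x = rat_perm (n * c) (refine n c s) x"
  proof (cases "0 \<le> x \<and> x < 1")
    case False thus ?thesis by (simp add: rp_out)
  next
    case True
    have nc: "n * c \<ge> 1" using n c by simp
    define Xr where "Xr = real (n * c) * x"
    define B where "B = nat \<lfloor>Xr\<rfloor>"
    define A where "A = nat \<lfloor>real n * x\<rfloor>"
    have X0: "0 \<le> Xr" using True unfolding Xr_def by simp
    have XBr: "Xr = real B + frac Xr" unfolding B_def frac_def using X0 by simp
    have "Xr < real (n * c)" using True nc unfolding Xr_def by simp
    hence "\<lfloor>Xr\<rfloor> < int (n * c)" by (simp add: floor_less_iff)
    hence Blt: "B < n * c" unfolding B_def using X0 by linarith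
    have nx: "real n * x = Xr / real c" unfolding Xr_def using c by simp
    have "\<lfloor>Xr / real_of_int (int c)\<rfloor> = \<lfloor>Xr\<rfloor> div int c" by (rule floor_divide_real_eq_div) simp
    hence "\<lfloor>real n * x\<rfloor> = \<lfloor>Xr\<rfloor> div int c" using nx by simp
    hence AB: "A = B div c" unfolding A_def B_def using X0 by (simp add: nat_div_distrib)
    have Bd: "real B = real c * real A + real (B mod c)"
      unfolding AB by (metis of_nat_add of_nat_mult div_mult_mod_eq mult.commute)
    have fr0: "0 \<le> frac Xr" "frac Xr < 1" by (auto simp: frac_lt_1)
    have "B mod c < c" using c by simp
    hence Bm: "real (B mod c) + 1 \<le> real c" by linarith
    define y where "y = (real (B mod c) + frac Xr) / real c"
    have y0: "0 \<le> y" "y < 1" unfolding y_def using fr0 Bm c by (auto simp: divide_less_eq)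
    have nxy: "real n * x = real A + y"
      unfolding nx y_def using XBr Bd c by (simp add: field_simps)
    have "\<lfloor>real n * x\<rfloor> = int A" unfolding nxy using y0 by (simp add: floor_unique)
    hence frn: "frac (real n * x) = y" unfolding frac_def nxy by simp
    have r1: "rat_perm n s x = (real (s A) + y) / real n"
      using rp_basic(1)[OF s n, of x] True unfolding A_def frn by simp
    have r2: "rat_perm (n * c) (refine n c s) x = (real (refine n c s B) + frac Xr) / real (n * c)"
      using rp_basic(1)[OF refine_permutes[OF s c] nc, of x] True unfolding B_def Xr_def by simp
    have "refine n c s B = s A * c + B mod c" using Blt AB by (simp add: refine_def)
    thus ?thesis unfolding r1 r2 y_def using c n by (simp add: field_simps)
  qed
qed

lemma rp_id_n: assumes "n \<ge> 1" shows "rat_perm n id = id"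
proof
  fix x show "rat_perm n id x = id x"
  proof (cases "0 \<le> x \<and> x < 1")
    case True
    hence "\<lfloor>real n * x\<rfloor> \<ge> 0" by simp
    hence "real (nat \<lfloor>real n * x\<rfloor>) + frac (real n * x) = real n * x"
      by (simp add: frac_def)
    thus ?thesis using True assms by (simp add: rat_perm_def)
  qed (simp add: rp_out)
qed

lemma R_mult_closed:
  assumes "f \<in> carrier rat_perm_group" "g \<in> carrier rat_perm_group"
  shows "f \<circ> g \<in> carrier rat_perm_group"
proof -
  obtain n s where f: "f = rat_perm n s" "n \<ge> 1" "s permutes {..<n}" using assms(1) by (auto simp: rat_perm_group_def)
  obtain m t where g: "g = rat_perm m t" "m \<ge> 1" "t permutes {..<m}" using assms(2) by (auto simp: rat_perm_group_def)
  have "f = rat_perm (n * m) (refine n m s)" using rp_refine[OF f(3) f(2) g(2)] f(1) by simp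
  moreover have "g = rat_perm (n * m) (refine m n t)" using rp_refine[OF g(3) g(2) f(2)] g(1) by (simp add: mult.commute)
  moreover have p1: "refine n m s permutes {..<n * m}" using refine_permutes[OF f(3) g(2)] .
  moreover have p2: "refine m n t permutes {..<n * m}" using refine_permutes[OF g(3) f(2)] by (simp add: mult.commute)
  moreover have "n * m \<ge> 1" using f g by simp
  ultimately have "f \<circ> g = rat_perm (n * m) (refine n m s \<circ> refine m n t)" by (simp add: rp_comp)
  moreover have "refine n m s \<circ> refine m n t permutes {..<n * m}" using p1 p2 by (rule permutes_compose[rotated])
  ultimately have "\<exists>k u. f \<circ> g = rat_perm k u \<and> k \<ge> 1 \<and> u permutes {..<k}"
    using \<open>n * m \<ge> 1\<close> by blast
  thus ?thesis by (simp add: rat_perm_group_def)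
qed

lemma R_inv:
  assumes "f \<in> carrier rat_perm_group"
  shows "\<exists>g \<in> carrier rat_perm_group. g \<circ> f = id"
proof -
  obtain n s where f: "f = rat_perm n s" "n \<ge> 1" "s permutes {..<n}" using assms(1) by (auto simp: rat_perm_group_def)
  have i: "inv_into UNIV s permutes {..<n}" using f(3) by (rule permutes_inv)
  have "rat_perm n (inv_into UNIV s) \<circ> f = rat_perm n (inv_into UNIV s \<circ> s)" using rp_comp[OF i f(3) f(2)] f(1) by simp
  also have "\<dots> = id" using permutes_inv_o(2)[OF f(3)] rp_id_n[OF f(2)] by simp
  finally have "\<exists>k u. rat_perm n (inv_into UNIV s) \<circ> f = id \<and> rat_perm n (inv_into UNIV s) = rat_perm k u \<and> k \<ge> 1 \<and> u permutes {..<k}"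
    using i f(2) by blast
  thus ?thesis by (auto simp: rat_perm_group_def)
qed

lemma R_id: "id \<in> carrier rat_perm_group"
proof -
  have "\<exists>k u. id = rat_perm k u \<and> k \<ge> 1 \<and> u permutes {..<k}"
    using rp_id permutes_id by (metis order_refl)
  thus ?thesis by (simp add: rat_perm_group_def)
qed

lemma R_mult[simp]: "monoid.mult rat_perm_group f g = f \<circ> g" and R_one[simp]: "one rat_perm_group = id"
  by (simp_all add: rat_perm_group_def)

lemma group_R: "group rat_perm_group"
  by (rule groupI) (auto simp: R_mult_closed R_inv R_id o_assoc)

lemma R_elem:
  assumes "f \<in> carrier rat_perm_group"
  shows "\<And>x. \<not> (0 \<le> x \<and> x < 1) \<Longrightarrow> f x = x"
    and "\<And>x. 0 \<le> x \<Longrightarrow> x < 1 \<Longrightarrow> 0 \<le> f x \<and> f x < 1"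
proof -
  obtain n s where f: "f = rat_perm n s" "n \<ge> 1" "s permutes {..<n}" using assms(1) by (auto simp: rat_perm_group_def)
  show "\<And>x. \<not> (0 \<le> x \<and> x < 1) \<Longrightarrow> f x = x" using f by (simp add: rp_out)
  show "\<And>x. 0 \<le> x \<Longrightarrow> x < 1 \<Longrightarrow> 0 \<le> f x \<and> f x < 1" using f rp_basic(2,3)[OF f(3) f(2)] by simp
qed

section \<open>Paths\<close>

definition dec :: "real \<Rightarrow> nat \<Rightarrow> nat" where
  "dec t k = nat \<lfloor>real (fact (Suc k)) * t\<rfloor> mod Suc k"

definition Aidx :: "nat \<Rightarrow> real \<Rightarrow> nat" where
  "Aidx n t = nat \<lfloor>real (fact (Suc n)) * t\<rfloor>"

fun idx :: "nat \<Rightarrow> (nat \<Rightarrow> nat) \<Rightarrow> nat" where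
  "idx 0 x = 0"
| "idx (Suc n) x = idx n x * Suc (Suc n) + x (Suc n)"

lemma dm1: "b < (m::nat) \<Longrightarrow> (a * m + b) mod m = b" by simp
lemma dm2: "b < (m::nat) \<Longrightarrow> (a * m + b) div m = a" by simp

lemma dec_Aidx: "dec t k = Aidx k t mod Suc k" by (simp add: dec_def Aidx_def)

lemma dec_path: "dec t \<in> BR_paths"
  unfolding BR_paths_def dec_def by (auto simp: less_Suc_eq_le[symmetric])

lemma Aidx_Suc_div:
  assumes "0 \<le> t"
  shows "Aidx (Suc n) t div Suc (Suc n) = Aidx n t"
proof -
  have e: "real (fact (Suc (Suc n))) * t / real_of_int (int (Suc (Suc n))) = real (fact (Suc n)) * t"
    by (simp add: field_simps)
  have "\<lfloor>real (fact (Suc (Suc n))) * t / real_of_int (int (Suc (Suc n)))\<rfloor>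
        = \<lfloor>real (fact (Suc (Suc n))) * t\<rfloor> div int (Suc (Suc n))"
    by (rule floor_divide_real_eq_div) simp
  hence "\<lfloor>real (fact (Suc n)) * t\<rfloor> = \<lfloor>real (fact (Suc (Suc n))) * t\<rfloor> div int (Suc (Suc n))"
    using e by simp
  moreover have "\<lfloor>real (fact (Suc (Suc n))) * t\<rfloor> \<ge> 0" using assms by simp
  ultimately show ?thesis unfolding Aidx_def by (metis nat_div_distrib nat_int)
qed

lemma idx_dec:
  assumes "0 \<le> t" "t < 1"
  shows "idx n (dec t) = Aidx n t"
proof (induction n)
  case 0
  show ?case using assms by (simp add: Aidx_def floor_eq_iff)
next
  case (Suc n)
  have "Aidx (Suc n) t = Aidx (Suc n) t div Suc (Suc n) * Suc (Suc n) + Aidx (Suc n) t mod Suc (Suc n)"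
    by (rule div_mult_mod_eq[symmetric])
  also have "\<dots> = idx n (dec t) * Suc (Suc n) + dec t (Suc n)"
    by (simp only: dec_Aidx Aidx_Suc_div[OF assms(1)] Suc.IH)
  finally show ?case by simp
qed

lemma idx_lt:
  assumes "x \<in> BR_paths"
  shows "idx n x < fact (Suc n)"
proof (induction n)
  case 0 show ?case by simp
next
  case (Suc n)
  have "x (Suc n) \<le> Suc n" using assms by (simp add: BR_paths_def)
  hence "idx n x * Suc (Suc n) + x (Suc n) < (idx n x + 1) * Suc (Suc n)" by simp
  also have "\<dots> \<le> fact (Suc n) * Suc (Suc n)" using Suc by (intro mult_right_mono) auto
  finally show ?case by (simp add: algebra_simps)
qed

lemma idx_mod:
  assumes "x \<in> BR_paths"
  shows "idx n x mod Suc n = x n"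
proof (cases n)
  case 0
  have "x 0 = 0" using assms unfolding BR_paths_def by (metis le_zero_eq mem_Collect_eq)
  thus ?thesis using 0 by simp
next
  case (Suc m)
  have "x (Suc m) < Suc (Suc m)" using assms by (simp add: BR_paths_def le_imp_less_Suc)
  thus ?thesis using Suc by (simp only: idx.simps dm1)
qed

lemma idx_eq_imp:
  assumes "x \<in> BR_paths" "y \<in> BR_paths" "idx n x = idx n y"
  shows "\<forall>k\<le>n. x k = y k"
  using assms(3)
proof (induction n)
  case 0 thus ?case using assms(1,2) unfolding BR_paths_def by (metis le_zero_eq mem_Collect_eq)
next
  case (Suc n)
  have x1: "x (Suc n) < Suc (Suc n)" "y (Suc n) < Suc (Suc n)"
    using assms(1,2) by (simp_all add: BR_paths_def le_imp_less_Suc)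
  have "idx (Suc n) x mod Suc (Suc n) = x (Suc n)" "idx (Suc n) y mod Suc (Suc n) = y (Suc n)"
    using x1 by (simp_all only: idx.simps dm1)
  hence e1: "x (Suc n) = y (Suc n)" using Suc.prems by metis
  have "idx (Suc n) x div Suc (Suc n) = idx n x" "idx (Suc n) y div Suc (Suc n) = idx n y"
    using x1 by (simp_all only: idx.simps dm2)
  hence "idx n x = idx n y" using Suc.prems by metis
  with Suc.IH have "\<forall>k\<le>n. x k = y k" .
  thus ?case using e1 by (auto simp: le_Suc_eq)
qed

lemma idx_cong:
  assumes "\<forall>k\<le>n. x k = y k"
  shows "idx n x = idx n y"
  using assms by (induction n) auto

lemma idx_eq_iff:
  assumes "x \<in> BR_paths" "y \<in> BR_paths"
  shows "idx n x = idx n y \<longleftrightarrow> (\<forall>k\<le>n. x k = y k)"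
  using idx_eq_imp[OF assms] idx_cong by blast

lemma fact_split:
  assumes "n < k"
  shows "fact (Suc k) = Suc k * (fact k div fact (Suc n)) * (fact (Suc n) :: nat)"
proof -
  have "fact (Suc n) dvd (fact k :: nat)" using assms by (intro fact_dvd) simp
  hence e: "fact k = (fact k div fact (Suc n)) * (fact (Suc n) :: nat)" by simp
  have "(fact (Suc k) :: nat) = Suc k * fact k" by simp
  also have "\<dots> = Suc k * ((fact k div fact (Suc n)) * fact (Suc n))" using e by (rule arg_cong)
  finally show ?thesis by (simp only: mult.assoc)
qed

lemma floor_mod_aux:
  fixes Z :: real and m d :: nat
  assumes Z0: "0 \<le> Z"
  shows "nat \<lfloor>real (m * d) * Z\<rfloor> mod m = nat \<lfloor>real (m * d) * frac Z\<rfloor> mod m"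
proof -
  define F where "F = \<lfloor>real (m * d) * frac Z\<rfloor>"
  have fZ: "0 \<le> frac Z" by simp
  have F0: "0 \<le> F" unfolding F_def using fZ by simp
  have "real (m * d) * Z = of_int (int (m * d) * \<lfloor>Z\<rfloor>) + real (m * d) * frac Z"
    by (simp add: frac_def algebra_simps)
  hence "\<lfloor>real (m * d) * Z\<rfloor> = int (m * d) * \<lfloor>Z\<rfloor> + F"
    unfolding F_def by (simp only: int_add_floor)
  hence "nat \<lfloor>real (m * d) * Z\<rfloor> = m * (d * nat \<lfloor>Z\<rfloor>) + nat F"
    using F0 Z0 by (simp add: nat_add_distrib nat_mult_distrib)
  hence "nat \<lfloor>real (m * d) * Z\<rfloor> mod m = (m * (d * nat \<lfloor>Z\<rfloor>) + nat F) mod m" by simp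
  also have "\<dots> = nat F mod m" by simp
  finally show ?thesis unfolding F_def .
qed

lemma dec_tail:
  assumes "0 \<le> t" "n < k"
  shows "dec t k = nat \<lfloor>real (Suc k * (fact k div fact (Suc n))) * frac (real (fact (Suc n)) * t)\<rfloor> mod Suc k"
proof -
  define d where "d = (fact k div fact (Suc n) :: nat)"
  define M where "M = (fact (Suc n) :: nat)"
  define Z where "Z = real M * t"
  have Z0: "0 \<le> Z" using assms unfolding Z_def by simp
  have fs: "fact (Suc k) = Suc k * d * M" unfolding d_def M_def by (rule fact_split[OF assms(2)])
  have "real (fact (Suc k)) * t = real (Suc k * d) * Z"
    unfolding Z_def fs by (simp only: of_nat_mult mult.assoc)
  hence "dec t k = nat \<lfloor>real (Suc k * d) * Z\<rfloor> mod Suc k" by (simp only: dec_def)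
  also have "\<dots> = nat \<lfloor>real (Suc k * d) * frac Z\<rfloor> mod Suc k" by (rule floor_mod_aux[OF Z0])
  finally show ?thesis unfolding d_def Z_def M_def .
qed

lemma fact_ge1: "(1::nat) \<le> fact n" by (simp add: Suc_leI)

lemma grid_point:
  assumes "A < fact (Suc n)"
  defines "t \<equiv> real A / real (fact (Suc n))"
  shows "0 \<le> t" "t < 1" "Aidx n t = A" "\<And>k. n < k \<Longrightarrow> dec t k = 0"
proof -
  have M0: "real (fact (Suc n)) > 0" by (simp only: of_nat_0_less_iff fact_gt_zero)
  show "0 \<le> t" unfolding t_def by simp
  have "real A < real (fact (Suc n))" using assms(1) by (simp only: of_nat_less_iff)
  thus "t < 1" unfolding t_def using M0 by (simp only: divide_less_eq_1_pos)
  have e: "real (fact (Suc n)) * t = real A" unfolding t_def using M0 by simp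
  show "Aidx n t = A" unfolding Aidx_def e by simp
  fix k assume nk: "n < k"
  have f0: "frac (real A) = 0" by (simp add: frac_def)
  from dec_tail[OF \<open>0 \<le> t\<close> nk] show "dec t k = 0" unfolding e f0 by simp
qed

lemma rp_dec:
  assumes p: "\<pi> permutes {..<fact (Suc n)}" and t: "0 \<le> t" "t < 1"
  defines "u \<equiv> rat_perm (fact (Suc n)) \<pi> t"
  shows "0 \<le> u" "u < 1" "Aidx n u = \<pi> (Aidx n t)" "\<And>k. n < k \<Longrightarrow> dec u k = dec t k"
proof -
  note b = rp_basic[OF p fact_ge1 t]
  show "0 \<le> u" "u < 1" unfolding u_def using b by simp_all
  show "Aidx n u = \<pi> (Aidx n t)" unfolding u_def Aidx_def using b(4) by simp
  fix k assume "n < k"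
  show "dec u k = dec t k"
    using dec_tail[OF \<open>0 \<le> u\<close> \<open>n < k\<close>] dec_tail[OF t(1) \<open>n < k\<close>] b(5) unfolding u_def by simp
qed

lemma dec_inj:
  assumes "0 \<le> s" "s < 1" "0 \<le> t" "t < 1" "dec s = dec t"
  shows "s = t"
proof (rule ccontr)
  assume ne: "s \<noteq> t"
  define e where "e = \<bar>s - t\<bar>"
  have e0: "0 < e" using ne unfolding e_def by simp
  then obtain n where n: "inverse (real (Suc n)) < e" using reals_Archimedean by blast
  define M where "M = real (fact (Suc n))"
  have "Aidx n s = Aidx n t" using idx_dec[OF assms(1,2)] idx_dec[OF assms(3,4)] assms(5) by metis
  moreover have "0 \<le> \<lfloor>M * s\<rfloor>" "0 \<le> \<lfloor>M * t\<rfloor>"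
    using assms unfolding M_def by (simp_all only: zero_le_floor of_nat_0_le_iff mult_nonneg_nonneg)
  ultimately have fl: "\<lfloor>M * s\<rfloor> = \<lfloor>M * t\<rfloor>"
    unfolding Aidx_def M_def by (simp only: eq_nat_nat_iff)
  have "\<bar>M * s - M * t\<bar> < 1" using fl by linarith
  moreover have "\<bar>M * s - M * t\<bar> = M * e" unfolding e_def M_def
    by (simp only: right_diff_distrib[symmetric] abs_mult abs_of_nat)
  ultimately have lt: "M * e < 1" by simp
  have "real (Suc n) \<le> M" unfolding M_def by (simp only: of_nat_le_iff fact_ge_self)
  hence "real (Suc n) * e \<le> M * e" using e0 by (intro mult_right_mono) simp_all
  moreover have "1 < real (Suc n) * e" using n by (simp add: field_simps)
  ultimately show False using lt by linarith
qed

section \<open>The groups G_n\<close>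

lemma Gn_props:
  assumes g: "g \<in> BR_Gn n"
  shows "\<And>x. x \<notin> BR_paths \<Longrightarrow> g x = x"
    and "\<And>x. x \<in> BR_paths \<Longrightarrow> g x \<in> BR_paths"
    and "inj_on g BR_paths"
    and "\<And>x k. x \<in> BR_paths \<Longrightarrow> n \<le> k \<Longrightarrow> g x k = x k"
    and "\<And>x y k. x \<in> BR_paths \<Longrightarrow> y \<in> BR_paths \<Longrightarrow> \<forall>i\<le>n. x i = y i \<Longrightarrow> k \<le> n \<Longrightarrow> g x k = g y k"
    and "homeomorphic_map (top_of_set BR_paths) (top_of_set BR_paths) g"
proof -
  have h: "homeomorphic_map (top_of_set BR_paths) (top_of_set BR_paths) g" using g by (simp add: BR_Gn_def)
  thus "homeomorphic_map (top_of_set BR_paths) (top_of_set BR_paths) g" .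
  show "\<And>x. x \<notin> BR_paths \<Longrightarrow> g x = x" using g by (simp add: BR_Gn_def)
  show "\<And>x k. x \<in> BR_paths \<Longrightarrow> n \<le> k \<Longrightarrow> g x k = x k" using g by (simp add: BR_Gn_def)
  show "\<And>x y k. x \<in> BR_paths \<Longrightarrow> y \<in> BR_paths \<Longrightarrow> \<forall>i\<le>n. x i = y i \<Longrightarrow> k \<le> n \<Longrightarrow> g x k = g y k"
    using g unfolding BR_Gn_def by blast
  have "g ` BR_paths = BR_paths" using h unfolding homeomorphic_map_def
    by (metis quotient_imp_surjective_map topspace_euclidean_subtopology)
  thus "\<And>x. x \<in> BR_paths \<Longrightarrow> g x \<in> BR_paths" by blast
  show "inj_on g BR_paths" using h unfolding homeomorphic_map_def
    by (metis topspace_euclidean_subtopology)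
qed

lemma Gn_mono:
  assumes "n \<le> m" shows "BR_Gn n \<subseteq> BR_Gn m"
proof
  fix g assume g: "g \<in> BR_Gn n"
  note P = Gn_props[OF g]
  show "g \<in> BR_Gn m" unfolding BR_Gn_def
  proof (intro CollectI conjI allI ballI impI)
    show "\<And>x. x \<notin> BR_paths \<Longrightarrow> g x = x" by (rule P(1))
    show "homeomorphic_map (top_of_set BR_paths) (top_of_set BR_paths) g" by (rule P(6))
    show "\<And>x k. x \<in> BR_paths \<Longrightarrow> m \<le> k \<Longrightarrow> g x k = x k" using P(4) assms by simp
    fix x y k assume x: "x \<in> BR_paths" and y: "y \<in> BR_paths" and a: "\<forall>k\<le>m. x k = y k" and k: "k \<le> m"
    show "g x k = g y k"
    proof (cases "k \<le> n")
      case True thus ?thesis using P(5)[OF x y] a assms by simp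
    next
      case False thus ?thesis using P(4)[OF x] P(4)[OF y] a k by simp
    qed
  qed
qed

lemma Gn_comp:
  assumes g: "g \<in> BR_Gn n" and h: "h \<in> BR_Gn n"
  shows "g \<circ> h \<in> BR_Gn n"
proof -
  note P = Gn_props[OF g] and Q = Gn_props[OF h]
  show ?thesis unfolding BR_Gn_def
  proof (intro CollectI conjI allI ballI impI)
    show "\<And>x. x \<notin> BR_paths \<Longrightarrow> (g \<circ> h) x = x" using P(1) Q(1) by simp
    show "homeomorphic_map (top_of_set BR_paths) (top_of_set BR_paths) (g \<circ> h)"
      by (rule homeomorphic_map_compose[OF Q(6) P(6)])
    show "\<And>x k. x \<in> BR_paths \<Longrightarrow> n \<le> k \<Longrightarrow> (g \<circ> h) x k = x k" using P(4) Q(4) Q(2) by simp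
    fix x y k assume x: "x \<in> BR_paths" and y: "y \<in> BR_paths" and a: "\<forall>k\<le>n. x k = y k" and k: "k \<le> n"
    have "\<forall>i\<le>n. h x i = h y i" using Q(5)[OF x y a] by blast
    thus "(g \<circ> h) x k = (g \<circ> h) y k" using P(5)[OF Q(2)[OF x] Q(2)[OF y]] k by simp
  qed
qed

lemma Gn_id: "id \<in> BR_Gn 0"
  unfolding BR_Gn_def by simp

lemma G_mult[simp]: "monoid.mult BR_full_group f g = f \<circ> g" and G_one[simp]: "one BR_full_group = id"
  and G_carrier: "carrier BR_full_group = (\<Union>n. BR_Gn n)"
  by (simp_all add: BR_full_group_def)

lemma G_closed:
  assumes "g \<in> carrier BR_full_group" "h \<in> carrier BR_full_group"
  shows "g \<circ> h \<in> carrier BR_full_group"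
proof -
  obtain a b where "g \<in> BR_Gn a" "h \<in> BR_Gn b" using assms by (auto simp: G_carrier)
  hence "g \<in> BR_Gn (max a b)" "h \<in> BR_Gn (max a b)" using Gn_mono by (meson max.cobounded1 max.cobounded2 subsetD)+
  thus ?thesis using Gn_comp by (auto simp: G_carrier)
qed

lemma G_common:
  assumes "g \<in> carrier BR_full_group" "h \<in> carrier BR_full_group"
  shows "\<exists>n. g \<in> BR_Gn n \<and> h \<in> BR_Gn n"
proof -
  obtain a b where "g \<in> BR_Gn a" "h \<in> BR_Gn b" using assms by (auto simp: G_carrier)
  hence "g \<in> BR_Gn (max a b)" "h \<in> BR_Gn (max a b)" using Gn_mono by (meson max.cobounded1 max.cobounded2 subsetD)+
  thus ?thesis by blast
qed

section \<open>The correspondence\<close>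

definition rel :: "((nat \<Rightarrow> nat) \<Rightarrow> (nat \<Rightarrow> nat)) \<Rightarrow> (real \<Rightarrow> real) \<Rightarrow> bool" where
  "rel g h \<longleftrightarrow> (\<forall>t. 0 \<le> t \<and> t < 1 \<longrightarrow> dec (h t) = g (dec t))"

lemma rel_unique:
  assumes "h1 \<in> carrier rat_perm_group" "h2 \<in> carrier rat_perm_group" "rel g h1" "rel g h2"
  shows "h1 = h2"
proof
  fix t show "h1 t = h2 t"
  proof (cases "0 \<le> t \<and> t < 1")
    case True
    have "dec (h1 t) = dec (h2 t)" using assms(3,4) True by (simp add: rel_def)
    thus ?thesis using R_elem(2)[OF assms(1)] R_elem(2)[OF assms(2)] True dec_inj by blast
  next
    case False thus ?thesis using R_elem(1)[OF assms(1)] R_elem(1)[OF assms(2)] by simp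
  qed
qed

lemma paths_eq_prefix:
  assumes "x \<in> BR_paths" "y \<in> BR_paths" "idx n x = idx n y" "k \<le> n"
  shows "x k = y k"
  using idx_eq_imp[OF assms(1-3)] assms(4) by blast

lemma rel_exists:
  assumes g: "g \<in> BR_Gn n"
  shows "\<exists>h \<in> carrier rat_perm_group. rel g h"
proof -
  note P = Gn_props[OF g]
  define M where "M = (fact (Suc n) :: nat)"
  have M1: "M \<ge> 1" unfolding M_def by (rule fact_ge1)
  define \<pi> where "\<pi> A = (if A < M then idx n (g (dec (real A / real M))) else A)" for A
  have ilt: "idx n (g (dec t)) < M" for t unfolding M_def by (rule idx_lt[OF P(2)[OF dec_path]])
  have lt: "\<pi> A < M" if "A < M" for A
    unfolding \<pi>_def using that ilt by simp
  have sub: "\<pi> ` {..<M} \<subseteq> {..<M}" using lt by auto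
  have inj: "inj_on \<pi> {..<M}"
  proof (rule inj_onI)
    fix A B assume A: "A \<in> {..<M}" and B: "B \<in> {..<M}" and e: "\<pi> A = \<pi> B"
    define a where "a = dec (real A / real M)"
    define b where "b = dec (real B / real M)"
    have gA: "A < fact (Suc n)" "B < fact (Suc n)" using A B unfolding M_def by auto
    note ga = grid_point[OF gA(1)] and gb = grid_point[OF gA(2)]
    have "idx n (g a) = idx n (g b)" using e A B unfolding \<pi>_def a_def b_def by simp
    hence pre: "\<forall>k\<le>n. g a k = g b k"
      using idx_eq_imp[OF P(2)[OF dec_path] P(2)[OF dec_path]] unfolding a_def b_def by blast
    have "g a = g b"
    proof
      fix k show "g a k = g b k"
      proof (cases "k \<le> n")
        case True thus ?thesis using pre by simp
      next
        case False
        hence "n \<le> k" "n < k" by simp_all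
        thus ?thesis using P(4)[OF dec_path] ga(4) gb(4) unfolding a_def b_def M_def by simp
      qed
    qed
    hence "a = b" using P(3) dec_path unfolding a_def b_def by (meson inj_onD)
    hence "idx n a = idx n b" by simp
    thus "A = B" unfolding a_def b_def M_def using idx_dec[OF ga(1,2)] idx_dec[OF gb(1,2)] ga(3) gb(3) by simp
  qed
  have perm: "\<pi> permutes {..<M}"
  proof (rule bij_imp_permutes)
    show "bij_betw \<pi> {..<M} {..<M}" using endo_inj_surj[OF _ sub inj] inj by (simp add: bij_betw_def)
    show "\<And>x. x \<notin> {..<M} \<Longrightarrow> \<pi> x = x" by (simp add: \<pi>_def)
  qed
  define h where "h = rat_perm M \<pi>"
  have hR: "h \<in> carrier rat_perm_group"
  proof -
    have "\<exists>k u. h = rat_perm k u \<and> k \<ge> 1 \<and> u permutes {..<k}" using perm M1 unfolding h_def by blast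
    thus ?thesis by (simp add: rat_perm_group_def)
  qed
  have "rel g h" unfolding rel_def
  proof (intro allI impI)
    fix t :: real assume t: "0 \<le> t \<and> t < 1"
    have perm': "\<pi> permutes {..<fact (Suc n)}" using perm unfolding M_def .
    have t1: "0 \<le> t" "t < 1" using t by simp_all
    note D = rp_dec[of \<pi> n t, OF perm' t1]
    define u where "u = h t"
    have u: "u = rat_perm (fact (Suc n)) \<pi> t" unfolding u_def h_def M_def ..
    define A where "A = Aidx n t"
    have At: "idx n (dec t) = A" unfolding A_def using idx_dec t by simp
    have AM: "A < fact (Suc n)" using idx_lt[OF dec_path, of n t] At by simp
    note gp = grid_point[OF AM]
    define a where "a = dec (real A / real M)"
    have ia: "idx n a = A" unfolding a_def M_def using idx_dec[OF gp(1,2)] gp(3) by simp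
    have agree: "\<forall>k\<le>n. a k = dec t k" using idx_eq_imp[OF dec_path dec_path] ia At unfolding a_def by metis
    have "\<forall>k\<le>n. g a k = g (dec t) k" using P(5)[OF dec_path dec_path] agree unfolding a_def by blast
    hence ig: "idx n (g a) = idx n (g (dec t))" by (rule idx_cong)
    have "idx n (dec u) = Aidx n u" unfolding u using idx_dec[OF D(1,2)] .
    also have "\<dots> = \<pi> A" unfolding u A_def using D(3) .
    also have "\<dots> = idx n (g a)" unfolding \<pi>_def a_def using AM unfolding M_def by simp
    finally have iu: "idx n (dec u) = idx n (g (dec t))" using ig by simp
    show "dec (h t) = g (dec t)" unfolding u_def[symmetric]
    proof
      fix k show "dec u k = g (dec t) k"
      proof (cases "k \<le> n")
        case True thus ?thesis using paths_eq_prefix[OF dec_path P(2)[OF dec_path] iu] by simp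
      next
        case False
        hence "n < k" by simp
        thus ?thesis using D(4) P(4)[OF dec_path] unfolding u by simp
      qed
    qed
  qed
  thus ?thesis using hR by blast
qed

lemma idx_cont: "continuous_on UNIV (idx n)"
proof (induction n)
  case 0
  have "idx 0 = (\<lambda>x. 0)" by (rule ext) simp
  thus ?case by simp
next
  case (Suc n)
  have e: "idx (Suc n) = (\<lambda>x. idx n x * Suc (Suc n) + x (Suc n))" by (rule ext) simp
  show ?case unfolding e
    by (intro continuous_on_add continuous_on_mult' Suc continuous_on_const continuous_on_product_coordinates)
qed

definition mk :: "nat \<Rightarrow> (nat \<Rightarrow> nat) \<Rightarrow> (nat \<Rightarrow> nat) \<Rightarrow> (nat \<Rightarrow> nat)" where
  "mk m \<sigma> x = (if x \<in> BR_paths then (\<lambda>k. if k \<le> m then dec (real (\<sigma> (idx m x)) / real (fact (Suc m))) k else x k) else x)"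

lemma mk_cont: "continuous_on BR_paths (mk m \<sigma>)"
proof -
  define H where "H B = dec (real (\<sigma> B) / real (fact (Suc m)))" for B
  define F where "F x = (\<lambda>k. if k \<le> m then H (idx m x) k else x k)" for x :: "nat \<Rightarrow> nat"
  have "continuous_on UNIV F" unfolding F_def
  proof (intro continuous_on_coordinatewise_then_product)
    fix k
    show "continuous_on UNIV (\<lambda>x. if k \<le> m then H (idx m x) k else x k)"
    proof (cases "k \<le> m")
      case True
      have "continuous_on UNIV (\<lambda>x. (\<lambda>B. H B k) (idx m x))"
        by (rule continuous_on_compose2[OF Topological_Spaces.continuous_on_discrete[of UNIV] idx_cont]) simp
      thus ?thesis using True by simp
    next
      case False thus ?thesis by simp
    qed
  qed
  hence "continuous_on BR_paths F" by (rule continuous_on_subset) simp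
  moreover have "\<And>x. x \<in> BR_paths \<Longrightarrow> mk m \<sigma> x = F x" unfolding mk_def F_def H_def by simp
  ultimately show ?thesis using continuous_on_cong by blast
qed

lemma mk_path: "x \<in> BR_paths \<Longrightarrow> mk m \<sigma> x \<in> BR_paths"
  using dec_path[of "real (\<sigma> (idx m x)) / real (fact (Suc m))"] unfolding mk_def BR_paths_def by auto

lemma mk_idx:
  assumes p: "\<sigma> permutes {..<fact (Suc m)}" and x: "x \<in> BR_paths"
  shows "idx m (mk m \<sigma> x) = \<sigma> (idx m x)"
proof -
  have lt: "\<sigma> (idx m x) < fact (Suc m)" using idx_lt[OF x] p by (meson lessThan_iff permutes_in_image)
  note gp = grid_point[OF lt]
  have "idx m (mk m \<sigma> x) = idx m (dec (real (\<sigma> (idx m x)) / real (fact (Suc m))))"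
    by (rule idx_cong) (simp add: mk_def x)
  also have "\<dots> = \<sigma> (idx m x)" using idx_dec[OF gp(1,2)] gp(3) by simp
  finally show ?thesis .
qed

lemma mk_low:
  assumes x: "x \<in> BR_paths" and B: "B < fact (Suc m)" and e: "idx m x = B" and k: "k \<le> m"
  shows "dec (real B / real (fact (Suc m))) k = x k"
proof -
  note gp = grid_point[OF B]
  have "idx m (dec (real B / real (fact (Suc m)))) = idx m x" using idx_dec[OF gp(1,2)] gp(3) e by simp
  thus ?thesis using paths_eq_prefix[OF dec_path x _ k] by blast
qed

lemma mk_inv:
  assumes p: "\<sigma> permutes {..<fact (Suc m)}" and q: "\<tau> \<circ> \<sigma> = id" and x: "x \<in> BR_paths"
  shows "mk m \<tau> (mk m \<sigma> x) = x"
proof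
  fix k
  have y: "mk m \<sigma> x \<in> BR_paths" by (rule mk_path[OF x])
  have tt: "\<tau> (\<sigma> (idx m x)) = idx m x" using q by (metis comp_apply id_apply)
  show "mk m \<tau> (mk m \<sigma> x) k = x k"
  proof (cases "k \<le> m")
    case True
    have "mk m \<tau> (mk m \<sigma> x) k = dec (real (idx m x) / real (fact (Suc m))) k"
      using True y mk_idx[OF p x] tt by (simp add: mk_def)
    also have "\<dots> = x k" by (rule mk_low[OF x idx_lt[OF x] refl True])
    finally show ?thesis .
  next
    case False thus ?thesis using x y by (simp add: mk_def)
  qed
qed

lemma mk_Gn:
  assumes p: "\<sigma> permutes {..<fact (Suc m)}"
    and md: "\<And>B. B < fact (Suc m) \<Longrightarrow> \<sigma> B mod Suc m = B mod Suc m"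
  shows "mk m \<sigma> \<in> BR_Gn m"
proof -
  define \<tau> where "\<tau> = inv_into UNIV \<sigma>"
  have pt: "\<tau> permutes {..<fact (Suc m)}" unfolding \<tau>_def using p by (rule permutes_inv)
  have c1: "\<tau> \<circ> \<sigma> = id" unfolding \<tau>_def using permutes_inv_o(2)[OF p] .
  have c2: "\<sigma> \<circ> \<tau> = id" unfolding \<tau>_def using permutes_inv_o(1)[OF p] .
  have hm: "homeomorphic_maps (top_of_set BR_paths) (top_of_set BR_paths) (mk m \<sigma>) (mk m \<tau>)"
    unfolding homeomorphic_maps_def
    using mk_cont mk_path mk_inv[OF p c1] mk_inv[OF pt c2] by auto
  show ?thesis unfolding BR_Gn_def
  proof (intro CollectI conjI allI ballI impI)
    show "\<And>x. x \<notin> BR_paths \<Longrightarrow> mk m \<sigma> x = x" by (simp add: mk_def)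
    show "homeomorphic_map (top_of_set BR_paths) (top_of_set BR_paths) (mk m \<sigma>)"
      using hm by (rule homeomorphic_maps_imp_map)
    fix x k assume x: "x \<in> BR_paths" and k: "m \<le> k"
    show "mk m \<sigma> x k = x k"
    proof (cases "k = m")
      case True
      have y: "mk m \<sigma> x \<in> BR_paths" by (rule mk_path[OF x])
      have "mk m \<sigma> x m = idx m (mk m \<sigma> x) mod Suc m" using idx_mod[OF y] by simp
      also have "\<dots> = \<sigma> (idx m x) mod Suc m" using mk_idx[OF p x] by simp
      also have "\<dots> = idx m x mod Suc m" using md idx_lt[OF x] by simp
      also have "\<dots> = x m" using idx_mod[OF x] .
      finally show ?thesis using True by simp
    next
      case False thus ?thesis using k x by (simp add: mk_def)
    qed
  next
    fix x y k assume x: "x \<in> BR_paths" and y: "y \<in> BR_paths" and a: "\<forall>k\<le>m. x k = y k" and k: "k \<le> m"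
    have "idx m x = idx m y" using a by (rule idx_cong)
    thus "mk m \<sigma> x k = mk m \<sigma> y k" using x y k by (simp add: mk_def)
  qed
qed

lemma mk_rel:
  assumes p: "\<sigma> permutes {..<fact (Suc m)}"
  shows "rel (mk m \<sigma>) (rat_perm (fact (Suc m)) \<sigma>)"
  unfolding rel_def
proof (intro allI impI)
  fix t :: real assume t: "0 \<le> t \<and> t < 1"
  have t1: "0 \<le> t" "t < 1" using t by simp_all
  note D = rp_dec[OF p t1]
  define u where "u = rat_perm (fact (Suc m)) \<sigma> t"
  have iu: "idx m (dec u) = \<sigma> (idx m (dec t))"
    unfolding u_def using idx_dec[OF D(1,2)] D(3) idx_dec[OF t1] by simp
  show "dec u = mk m \<sigma> (dec t)"
  proof
    fix k show "dec u k = mk m \<sigma> (dec t) k"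
    proof (cases "k \<le> m")
      case True
      have "dec u k = mk m \<sigma> (dec t) k"
        using paths_eq_prefix[OF dec_path mk_path[OF dec_path] _ True] iu mk_idx[OF p dec_path] by metis
      thus ?thesis .
    next
      case False thus ?thesis using D(4) dec_path unfolding u_def by (simp add: mk_def)
    qed
  qed
qed

lemma R_from_G:
  assumes "h \<in> carrier rat_perm_group"
  shows "\<exists>g \<in> carrier BR_full_group. rel g h"
proof -
  obtain N s where h: "h = rat_perm N s" "N \<ge> 1" "s permutes {..<N}" using assms by (auto simp: rat_perm_group_def)
  define c where "c = Suc N * fact (N - 1)"
  have c1: "c \<ge> 1" unfolding c_def
    by (simp only: One_nat_def Suc_le_eq nat_0_less_mult_iff zero_less_Suc fact_gt_zero simp_thms)
  have Nc: "N * c = fact (Suc N)"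
  proof -
    obtain k where k: "N = Suc k" using h(2) by (cases N) auto
    have "fact N = N * (fact (N - 1) :: nat)" unfolding k by simp
    thus ?thesis unfolding c_def by (simp add: algebra_simps)
  qed
  define \<sigma> where "\<sigma> = refine N c s"
  have p: "\<sigma> permutes {..<fact (Suc N)}" unfolding \<sigma>_def Nc[symmetric] by (rule refine_permutes[OF h(3) c1])
  have hh: "h = rat_perm (fact (Suc N)) \<sigma>" unfolding \<sigma>_def Nc[symmetric] using rp_refine[OF h(3) h(2) c1] h(1) by simp
  have dv: "Suc N dvd c" unfolding c_def by (rule dvd_triv_left)
  have md: "\<sigma> B mod Suc N = B mod Suc N" if B: "B < fact (Suc N)" for B
  proof -
    obtain e where ce: "c = Suc N * e" using dv by blast
    have "\<sigma> B = s (B div c) * c + B mod c" using B unfolding \<sigma>_def refine_def Nc by simp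
    also have "\<dots> = Suc N * (s (B div c) * e) + B mod c" unfolding ce by (simp only: mult.commute mult.left_commute)
    finally have "\<sigma> B mod Suc N = (Suc N * (s (B div c) * e) + B mod c) mod Suc N" by simp
    hence "\<sigma> B mod Suc N = (B mod c) mod Suc N" by (simp only: mod_mult_self4)
    also have "\<dots> = B mod Suc N" using dv by (rule mod_mod_cancel)
    finally show ?thesis .
  qed
  have "mk N \<sigma> \<in> BR_Gn N" by (rule mk_Gn[OF p md])
  moreover have "rel (mk N \<sigma>) h" unfolding hh by (rule mk_rel[OF p])
  ultimately show ?thesis by (auto simp: G_carrier)
qed

definition Phi :: "((nat \<Rightarrow> nat) \<Rightarrow> (nat \<Rightarrow> nat)) \<Rightarrow> (real \<Rightarrow> real)" where
  "Phi g = (THE h. h \<in> carrier rat_perm_group \<and> rel g h)"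

lemma Phi_eq:
  assumes "h \<in> carrier rat_perm_group" "rel g h"
  shows "Phi g = h"
  unfolding Phi_def
proof (rule the_equality)
  show "h \<in> carrier rat_perm_group \<and> rel g h" using assms by simp
  fix h' assume "h' \<in> carrier rat_perm_group \<and> rel g h'"
  thus "h' = h" using rel_unique assms by blast
qed

lemma Phi_props:
  assumes "g \<in> carrier BR_full_group"
  shows "Phi g \<in> carrier rat_perm_group" "rel g (Phi g)"
proof -
  obtain n where "g \<in> BR_Gn n" using assms by (auto simp: G_carrier)
  then obtain h where "h \<in> carrier rat_perm_group" "rel g h" using rel_exists by blast
  moreover have "Phi g = h" using Phi_eq calculation by blast
  ultimately show "Phi g \<in> carrier rat_perm_group" "rel g (Phi g)" by simp_all
qed

lemma Phi_mult:
  assumes g: "g \<in> carrier BR_full_group" and g': "g' \<in> carrier BR_full_group"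
  shows "Phi (g \<circ> g') = Phi g \<circ> Phi g'"
proof (rule Phi_eq)
  show "Phi g \<circ> Phi g' \<in> carrier rat_perm_group" using Phi_props g g' R_mult_closed by blast
  show "rel (g \<circ> g') (Phi g \<circ> Phi g')" unfolding rel_def
  proof (intro allI impI)
    fix t :: real assume t: "0 \<le> t \<and> t < 1"
    have "0 \<le> Phi g' t \<and> Phi g' t < 1" using R_elem(2)[OF Phi_props(1)[OF g']] t by blast
    thus "dec ((Phi g \<circ> Phi g') t) = (g \<circ> g') (dec t)"
      using Phi_props(2)[OF g] Phi_props(2)[OF g'] t unfolding rel_def by simp
  qed
qed

lemma Phi_inj: "inj_on Phi (carrier BR_full_group)"
proof (rule inj_onI)
  fix g g' assume g: "g \<in> carrier BR_full_group" and g': "g' \<in> carrier BR_full_group" and e: "Phi g = Phi g'"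
  obtain n where n: "g \<in> BR_Gn n" "g' \<in> BR_Gn n" using G_common[OF g g'] by blast
  note P = Gn_props[OF n(1)] and Q = Gn_props[OF n(2)]
  have rr: "g (dec t) = g' (dec t)" if "0 \<le> t" "t < 1" for t
    using Phi_props(2)[OF g] Phi_props(2)[OF g'] e that unfolding rel_def by metis
  show "g = g'"
  proof
    fix x show "g x = g' x"
    proof (cases "x \<in> BR_paths")
      case False thus ?thesis using P(1) Q(1) by simp
    next
      case x: True
      define A where "A = idx n x"
      have AM: "A < fact (Suc n)" unfolding A_def by (rule idx_lt[OF x])
      note gp = grid_point[OF AM]
      define y where "y = dec (real A / real (fact (Suc n)))"
      have iy: "idx n y = idx n x" unfolding y_def A_def using idx_dec[OF gp(1,2)] gp(3) A_def by simp
      hence ag: "\<forall>k\<le>n. y k = x k" using idx_eq_imp[OF dec_path x] unfolding y_def by blast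
      have gy: "g y = g' y" unfolding y_def using rr gp(1,2) by simp
      show ?thesis
      proof
        fix k show "g x k = g' x k"
        proof (cases "k \<le> n")
          case True
          have a1: "g x k = g y k" using P(5)[OF x dec_path] ag True unfolding y_def by simp
          have a2: "g' x k = g' y k" using Q(5)[OF x dec_path] ag True unfolding y_def by simp
          show ?thesis using a1 a2 gy by simp
        next
          case False thus ?thesis using P(4)[OF x] Q(4)[OF x] by simp
        qed
      qed
    qed
  qed
qed

lemma Phi_surj: "Phi ` carrier BR_full_group = carrier rat_perm_group"
proof
  show "Phi ` carrier BR_full_group \<subseteq> carrier rat_perm_group" using Phi_props(1) by blast
  show "carrier rat_perm_group \<subseteq> Phi ` carrier BR_full_group"
  proof
    fix h assume h: "h \<in> carrier rat_perm_group"
    then obtain g where g: "g \<in> carrier BR_full_group" "rel g h" using R_from_G by blast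
    hence "Phi g = h" using Phi_eq h by blast
    thus "h \<in> Phi ` carrier BR_full_group" using g by blast
  qed
qed

lemma Phi_id: "Phi id = id"
  by (rule Phi_eq[OF R_id]) (simp add: rel_def)

lemma G_id: "id \<in> carrier BR_full_group" using Gn_id by (auto simp: G_carrier)

lemma G_inv:
  assumes g: "g \<in> carrier BR_full_group"
  shows "\<exists>y\<in>carrier BR_full_group. y \<circ> g = id"
proof -
  obtain r where r: "r \<in> carrier rat_perm_group" "r \<circ> Phi g = id"
    using R_inv[OF Phi_props(1)[OF g]] by (elim bexE)
  have "r \<in> Phi ` carrier BR_full_group" using Phi_surj r(1) by (simp only:)
  then obtain g' where g': "g' \<in> carrier BR_full_group" "r = Phi g'" by (elim imageE)
  have "Phi (g' \<circ> g) = Phi g' \<circ> Phi g" by (rule Phi_mult[OF g'(1) g])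
  also have "\<dots> = id" using g'(2) r(2) by (simp only:)
  also have "\<dots> = Phi id" by (rule Phi_id[symmetric])
  finally have "g' \<circ> g = id" by (rule inj_onD[OF Phi_inj _ G_closed[OF g'(1) g] G_id])
  thus ?thesis using g'(1) by (rule_tac bexI)
qed

lemma group_G: "group BR_full_group"
proof (rule groupI)
  show "\<And>x y. x \<in> carrier BR_full_group \<Longrightarrow> y \<in> carrier BR_full_group \<Longrightarrow> x \<otimes>\<^bsub>BR_full_group\<^esub> y \<in> carrier BR_full_group"
    unfolding G_mult by (rule G_closed)
  show "\<one>\<^bsub>BR_full_group\<^esub> \<in> carrier BR_full_group" unfolding G_one by (rule G_id)
  show "\<And>x y z. x \<in> carrier BR_full_group \<Longrightarrow> y \<in> carrier BR_full_group \<Longrightarrow> z \<in> carrier BR_full_group \<Longrightarrow>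
      x \<otimes>\<^bsub>BR_full_group\<^esub> y \<otimes>\<^bsub>BR_full_group\<^esub> z = x \<otimes>\<^bsub>BR_full_group\<^esub> (y \<otimes>\<^bsub>BR_full_group\<^esub> z)"
    unfolding G_mult by (rule o_assoc[symmetric])
  show "\<And>x. x \<in> carrier BR_full_group \<Longrightarrow> \<one>\<^bsub>BR_full_group\<^esub> \<otimes>\<^bsub>BR_full_group\<^esub> x = x"
    unfolding G_mult G_one by (rule id_o)
  show "\<And>x. x \<in> carrier BR_full_group \<Longrightarrow> \<exists>y\<in>carrier BR_full_group. y \<otimes>\<^bsub>BR_full_group\<^esub> x = \<one>\<^bsub>BR_full_group\<^esub>"
    unfolding G_mult G_one by (rule G_inv)
qed
theorem mainTheorem19:
  shows "group BR_full_group \<and> group rat_perm_group \<and> BR_full_group \<cong> rat_perm_group"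
proof (intro conjI)
  show "group BR_full_group" by (rule group_G)
  show "group rat_perm_group" by (rule group_R)
  have hom: "Phi \<in> hom BR_full_group rat_perm_group"
  proof (unfold hom_def, intro CollectI conjI ballI)
    show "Phi \<in> carrier BR_full_group \<rightarrow> carrier rat_perm_group" using Phi_props(1) by (rule Pi_I)
    fix x y assume "x \<in> carrier BR_full_group" "y \<in> carrier BR_full_group"
    thus "Phi (x \<otimes>\<^bsub>BR_full_group\<^esub> y) = Phi x \<otimes>\<^bsub>rat_perm_group\<^esub> Phi y"
      unfolding G_mult R_mult by (rule Phi_mult)
  qed
  have "bij_betw Phi (carrier BR_full_group) (carrier rat_perm_group)"
    unfolding bij_betw_def using Phi_inj Phi_surj by (rule conjI)
  hence "Phi \<in> iso BR_full_group rat_perm_group" using hom unfolding iso_def by (rule_tac CollectI, rule_tac conjI)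
  hence "\<exists>f. f \<in> iso BR_full_group rat_perm_group" by (rule exI[of _ Phi])
  thus "BR_full_group \<cong> rat_perm_group" unfolding is_iso_def by (simp only: ex_in_conv simp_thms)
qed

end
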